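(* Let $n \geq 3$ be an integer and let $\ell$ be an odd positive integer. Then the quotient group $B_n[\ell]/B_n[2\ell]$ is isomorphic to the symmetric group $S_n$. (Here $B_n[2\ell]$ is a normal subgroup of $B_n[\ell]$, being the kernel of the reduction-mod-$2\ell$ Burau map restricted to $B_n[\ell]$.)
   Context: $B_n$ denotes the braid group on $n$ strands with standard Artin generators $\sigma_1,\dots,\sigma_{n-1}$. The reduced integral Burau representation $\rho_{-1}: B_n \to GL(n-1,\mathbb{Z})$ is defined on generators by $\rho_{-1}(\sigma_1)=\begin{pmatrix}1&0\\1&1\end{pmatrix}\oplus \mathrm{Id}_{n-3}$, $\rho_{-1}(\sigma_{n-1})=\mathrm{Id}_{n-3}\oplus\begin{pmatrix}1&-1\\0&1\end{pmatrix}$, and for $1<i<n-1$, $\rho_{-1}(\sigma_i)=\mathrm{Id}_{i-2}\oplus\begin{pmatrix}1&-1&0\\0&1&0\\0&1&1\end{pmatrix}\oplus \mathrm{Id}_{n-i-2}$, where $\oplus$ denotes block-diagonal sum. For a positive integer $\ell$, let $r_\ell: GL(n-1,\mathbb{Z})\to GL(n-1,\mathbb{Z}/\ell\mathbb{Z})$ be entrywise reduction mod $\ell$. The level $\ell$ congruence subgroup of the braid group is $B_n[\ell] := \ker(r_\ell\circ\rho_{-1})$. *)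

theory Defs
  imports "HOL-Algebra.Sym_Groups" "HOL-Algebra.Coset"
begin

text \<open>A braid letter (i, True) stands for sigma_i, (i, False) for sigma_i inverse.
  A word is valid in B_n if all its indices lie in 1..n-1.\<close>

type_synonym braid_word = "(nat \<times> bool) list"

definition valid_word :: "nat \<Rightarrow> braid_word \<Rightarrow> bool" where
  "valid_word n w \<longleftrightarrow> (\<forall>(i, b) \<in> set w. 1 \<le> i \<and> i \<le> n - 1)"

text \<open>Defining relator pairs (l, r), meaning l = r in B_n: free cancellation,
  far commutativity, and the braid relation.\<close>

definition braid_relators :: "nat \<Rightarrow> (braid_word \<times> braid_word) set" where
  "braid_relators n =
     {([(i, b), (i, \<not> b)], []) | i b. 1 \<le> i \<and> i \<le> n - 1}
   \<union> {([(i, True), (j, True)], [(j, True), (i, True)]) | i j.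
        1 \<le> i \<and> i \<le> n - 1 \<and> 1 \<le> j \<and> j \<le> n - 1 \<and> (i + 2 \<le> j \<or> j + 2 \<le> i)}
   \<union> {([(i, True), (Suc i, True), (i, True)], [(Suc i, True), (i, True), (Suc i, True)]) | i.
        1 \<le> i \<and> Suc i \<le> n - 1}"

inductive braid_eq :: "nat \<Rightarrow> braid_word \<Rightarrow> braid_word \<Rightarrow> bool" for n where
  refl: "valid_word n w \<Longrightarrow> braid_eq n w w"
| sym: "braid_eq n u v \<Longrightarrow> braid_eq n v u"
| trans: "braid_eq n u v \<Longrightarrow> braid_eq n v w \<Longrightarrow> braid_eq n u w"
| rel: "valid_word n u \<Longrightarrow> valid_word n v \<Longrightarrow> (l, r) \<in> braid_relators n
        \<Longrightarrow> braid_eq n (u @ l @ v) (u @ r @ v)"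

definition braid_class :: "nat \<Rightarrow> braid_word \<Rightarrow> braid_word set" where
  "braid_class n w = {v. braid_eq n w v}"

definition braid_group :: "nat \<Rightarrow> braid_word set monoid" where
  "braid_group n =
     \<lparr> carrier = {braid_class n w | w. valid_word n w},
       mult = (\<lambda>A B. braid_class n ((SOME u. u \<in> A) @ (SOME v. v \<in> B))),
       one = braid_class n [] \<rparr>"

text \<open>Integer matrices of size (n-1) x (n-1) are represented as functions
  nat => nat => int, with rows/columns indexed 0..n-2 (only those entries matter).\<close>

definition mat_mult :: "nat \<Rightarrow> (nat \<Rightarrow> nat \<Rightarrow> int) \<Rightarrow> (nat \<Rightarrow> nat \<Rightarrow> int) \<Rightarrow> (nat \<Rightarrow> nat \<Rightarrow> int)" where
  "mat_mult k A B = (\<lambda>r c. \<Sum>j<k. A r j * B j c)"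

definition mat_id :: "nat \<Rightarrow> nat \<Rightarrow> int" where
  "mat_id = (\<lambda>r c. if r = c then 1 else 0)"

text \<open>rho(sigma_i) as in the paper (0-based indices): the block
  [[1,0],[1,1]] at rows/cols 0,1 for i = 1; the block [[1,-1],[0,1]] at rows/cols n-3,n-2
  for i = n-1; the block [[1,-1,0],[0,1,0],[0,1,1]] at rows/cols i-2,i-1,i otherwise.
  Since the nilpotent part squares to zero, rho(sigma_i^-1) = Id - (that part).\<close>

definition burau_gen :: "nat \<Rightarrow> nat \<Rightarrow> bool \<Rightarrow> (nat \<Rightarrow> nat \<Rightarrow> int)" where
  "burau_gen n i b = (\<lambda>r c. mat_id r c +
      (if b then 1 else -1) *
        ((if r = i \<and> c = i - 1 \<and> i \<le> n - 2 then 1 else 0)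
         - (if 2 \<le> i \<and> r = i - 2 \<and> c = i - 1 then 1 else 0)))"

definition burau :: "nat \<Rightarrow> braid_word \<Rightarrow> (nat \<Rightarrow> nat \<Rightarrow> int)" where
  "burau n w = foldr (\<lambda>(i, b) M. mat_mult (n - 1) (burau_gen n i b) M) w mat_id"

definition congruence_subgroup :: "nat \<Rightarrow> nat \<Rightarrow> braid_word set set" where
  "congruence_subgroup n l =
     {A \<in> carrier (braid_group n). \<forall>w \<in> A. \<forall>r < n - 1. \<forall>c < n - 1.
        burau n w r c mod int l = mat_id r c mod int l}"

end

theory Submission
  imports Defs "HOL-Combinatorics.Transposition"
begin

lemma valid_append[simp]: "valid_word n (u @ v) \<longleftrightarrow> valid_word n u \<and> valid_word n v"
  by (auto simp: valid_word_def)

lemma valid_Cons[simp]: "valid_word n (x # v) \<longleftrightarrow> 1 \<le> fst x \<and> fst x \<le> n - 1 \<and> valid_word n v"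
  by (cases x) (auto simp: valid_word_def)

lemma valid_Nil[simp]: "valid_word n []"
  by (auto simp: valid_word_def)

lemma relators_valid: "(l, r) \<in> braid_relators n \<Longrightarrow> valid_word n l \<and> valid_word n r"
  by (auto simp: braid_relators_def)

lemma braid_eq_valid: "braid_eq n u v \<Longrightarrow> valid_word n u \<and> valid_word n v"
  by (induction rule: braid_eq.induct) (auto dest: relators_valid)

lemma braid_eq_app_right: "braid_eq n u u' \<Longrightarrow> valid_word n v \<Longrightarrow> braid_eq n (u @ v) (u' @ v)"
proof (induction rule: braid_eq.induct)
  case (refl w) then show ?case by (simp add: braid_eq.refl)
next
  case (sym u v) then show ?case by (simp add: braid_eq.sym)
next
  case (trans u v w) then show ?case by (meson braid_eq.trans)
next
  case (rel u v l r)
  then show ?case using braid_eq.rel[of n u "v @ _" l r] by simp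
qed

lemma braid_eq_app_left: "braid_eq n u u' \<Longrightarrow> valid_word n v \<Longrightarrow> braid_eq n (v @ u) (v @ u')"
proof (induction rule: braid_eq.induct)
  case (refl w) then show ?case by (simp add: braid_eq.refl)
next
  case (sym u v) then show ?case by (simp add: braid_eq.sym)
next
  case (trans u v w) then show ?case by (meson braid_eq.trans)
next
  case (rel u w l r)
  then show ?case using braid_eq.rel[of n "v @ u" w l r] by simp
qed

lemma braid_eq_app: "braid_eq n u u' \<Longrightarrow> braid_eq n v v' \<Longrightarrow> braid_eq n (u @ v) (u' @ v')"
  by (meson braid_eq.trans braid_eq_app_left braid_eq_app_right braid_eq_valid)

lemma class_eq_iff: "valid_word n u \<Longrightarrow> braid_class n u = braid_class n v \<longleftrightarrow> braid_eq n u v"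
  unfolding braid_class_def
  by (auto intro: braid_eq.refl braid_eq.sym braid_eq.trans)

lemma in_class_iff: "w \<in> braid_class n u \<longleftrightarrow> braid_eq n u w"
  by (simp add: braid_class_def)

lemma rep_class: "valid_word n w \<Longrightarrow> braid_eq n w (SOME u. u \<in> braid_class n w)"
  by (metis braid_eq.refl in_class_iff someI)

lemma bg_mult: "valid_word n a \<Longrightarrow> valid_word n b \<Longrightarrow>
  braid_class n a \<otimes>\<^bsub>braid_group n\<^esub> braid_class n b = braid_class n (a @ b)"
  unfolding braid_group_def apply simp
  by (metis braid_eq.sym braid_eq_app braid_eq_valid class_eq_iff rep_class)

lemma bg_carrier: "A \<in> carrier (braid_group n) \<longleftrightarrow> (\<exists>w. valid_word n w \<and> A = braid_class n w)"
  by (auto simp: braid_group_def)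

lemma bg_one: "\<one>\<^bsub>braid_group n\<^esub> = braid_class n []"
  by (simp add: braid_group_def)

definition invw :: "braid_word \<Rightarrow> braid_word" where
  "invw w = rev (map (\<lambda>(i, b). (i, \<not> b)) w)"

lemma invw_valid: "valid_word n w \<Longrightarrow> valid_word n (invw w)"
  by (auto simp: valid_word_def invw_def)

lemma invw_Cons: "invw (x # w) = invw w @ [(fst x, \<not> snd x)]"
  by (cases x) (simp add: invw_def)

lemma invw_cancel: "valid_word n w \<Longrightarrow> braid_eq n (invw w @ w) []"
proof (induction w)
  case Nil then show ?case by (simp add: invw_def braid_eq.refl)
next
  case (Cons x w)
  obtain i b where x: "x = (i, b)" by force
  have rl: "([(i, \<not> b), (i, b)], []) \<in> braid_relators n"
    using Cons.prems x unfolding braid_relators_def by force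
  have "braid_eq n (invw w @ [(i, \<not> b), (i, b)] @ w) (invw w @ [] @ w)"
    by (rule braid_eq.rel) (use Cons.prems x invw_valid rl in auto)
  then show ?case using Cons x by (simp add: invw_Cons) (meson braid_eq.trans)
qed

lemma braid_group_is_group: "group (braid_group n)"
proof (rule groupI)
  fix x y assume "x \<in> carrier (braid_group n)" "y \<in> carrier (braid_group n)"
  then show "x \<otimes>\<^bsub>braid_group n\<^esub> y \<in> carrier (braid_group n)"
    by (auto simp: bg_carrier bg_mult) (metis valid_append)
next
  show "\<one>\<^bsub>braid_group n\<^esub> \<in> carrier (braid_group n)"
    unfolding bg_carrier bg_one by (metis valid_Nil)
next
  fix x y z assume "x \<in> carrier (braid_group n)" "y \<in> carrier (braid_group n)" "z \<in> carrier (braid_group n)"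
  then show "x \<otimes>\<^bsub>braid_group n\<^esub> y \<otimes>\<^bsub>braid_group n\<^esub> z =
           x \<otimes>\<^bsub>braid_group n\<^esub> (y \<otimes>\<^bsub>braid_group n\<^esub> z)"
    by (auto simp: bg_carrier bg_mult)
next
  fix x assume "x \<in> carrier (braid_group n)"
  then show "\<one>\<^bsub>braid_group n\<^esub> \<otimes>\<^bsub>braid_group n\<^esub> x = x"
    by (auto simp: bg_carrier bg_mult bg_one)
next
  fix x assume "x \<in> carrier (braid_group n)"
  then obtain w where w: "valid_word n w" "x = braid_class n w" by (auto simp: bg_carrier)
  show "\<exists>y\<in>carrier (braid_group n). y \<otimes>\<^bsub>braid_group n\<^esub> x = \<one>\<^bsub>braid_group n\<^esub>"
    using w invw_valid[OF w(1)] invw_cancel[OF w(1)]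
    by (intro bexI[of _ "braid_class n (invw w)"]) (auto simp: bg_carrier bg_mult bg_one class_eq_iff intro: braid_eq.refl)
qed


definition tr :: "nat \<Rightarrow> nat \<Rightarrow> nat" where
  "tr i = Transposition.transpose i (Suc i)"

definition perm :: "braid_word \<Rightarrow> nat \<Rightarrow> nat" where
  "perm w = foldr (\<lambda>(i, b) p. tr i \<circ> p) w id"

lemma perm_Nil[simp]: "perm [] = id" by (simp add: perm_def)
lemma perm_Cons[simp]: "perm ((i, b) # w) = tr i \<circ> perm w" by (simp add: perm_def)
lemma perm_append: "perm (u @ v) = perm u \<circ> perm v"
  by (induction u) (auto simp: perm_def)

lemma tr_tr: "tr i \<circ> tr i = id" by (simp add: tr_def)

lemma perm_relators: "(l, r) \<in> braid_relators n \<Longrightarrow> perm l = perm r"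
  unfolding braid_relators_def
  by (auto simp: tr_tr fun_eq_iff tr_def transpose_def)

lemma perm_braid_eq: "braid_eq n u v \<Longrightarrow> perm u = perm v"
  by (induction rule: braid_eq.induct) (auto simp: perm_append perm_relators)

lemma perm_permutes: "valid_word n w \<Longrightarrow> perm w permutes {1..n}"
proof (induction w)
  case Nil then show ?case by (simp only: perm_Nil permutes_id)
next
  case (Cons x w)
  obtain i b where x: "x = (i, b)" by force
  have "tr i permutes {1..n}" unfolding tr_def using Cons.prems x
    by (intro permutes_swap_id) auto
  then have "tr i \<circ> perm w permutes {1..n}" using Cons x by (intro permutes_compose) auto
  then show ?case unfolding x perm_Cons .
qed

definition coef :: "nat \<Rightarrow> nat \<Rightarrow> bool \<Rightarrow> nat \<Rightarrow> int" where
  "coef n i b r = (if b then 1 else -1) *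
        ((if r = i \<and> i \<le> n - 2 then 1 else 0) - (if 2 \<le> i \<and> r = i - 2 then 1 else 0))"

definition act :: "nat \<Rightarrow> nat \<Rightarrow> bool \<Rightarrow> (nat \<Rightarrow> int) \<Rightarrow> (nat \<Rightarrow> int)" where
  "act n i b v = (\<lambda>r. v r + coef n i b r * v (i - 1))"

definition actw :: "nat \<Rightarrow> braid_word \<Rightarrow> (nat \<Rightarrow> int) \<Rightarrow> (nat \<Rightarrow> int)" where
  "actw n w = foldr (\<lambda>(i, b) f. act n i b \<circ> f) w id"

lemma actw_Nil[simp]: "actw n [] = id" by (simp add: actw_def)
lemma actw_Cons[simp]: "actw n ((i, b) # w) = act n i b \<circ> actw n w" by (simp add: actw_def)
lemma actw_append: "actw n (u @ v) = actw n u \<circ> actw n v"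
  by (induction u) (auto simp: actw_def)

lemma burau_gen_alt: "burau_gen n i b r j = mat_id r j + (if j = i - 1 then coef n i b r else 0)"
  by (auto simp: burau_gen_def mat_id_def coef_def)

lemma sum_mat_id_left: "r < k \<Longrightarrow> (\<Sum>j<k. mat_id r j * f j) = f r"
proof -
  assume "r < k"
  have "(\<Sum>j<k. mat_id r j * f j) = (\<Sum>j<k. if j = r then f j else 0)"
    by (rule sum.cong) (auto simp: mat_id_def)
  then show ?thesis using \<open>r < k\<close> by simp
qed

lemma sum_mat_id_right: "c < k \<Longrightarrow> (\<Sum>j<k. f j * mat_id j c) = f c"
proof -
  assume "c < k"
  have "(\<Sum>j<k. f j * mat_id j c) = (\<Sum>j<k. if j = c then f j else 0)"
    by (rule sum.cong) (auto simp: mat_id_def)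
  then show ?thesis using \<open>c < k\<close> by simp
qed

lemma burau_Cons_entry:
  assumes "r < n - 1" "1 \<le> i" "i \<le> n - 1"
  shows "burau n ((i, b) # w) r c = burau n w r c + coef n i b r * burau n w (i - 1) c"
proof -
  have "burau n ((i, b) # w) r c = (\<Sum>j<n - 1. burau_gen n i b r j * burau n w j c)"
    by (simp add: burau_def mat_mult_def)
  also have "\<dots> = (\<Sum>j<n - 1. mat_id r j * burau n w j c) +
       (\<Sum>j<n - 1. (if j = i - 1 then coef n i b r * burau n w j c else 0))"
    by (subst sum.distrib[symmetric], rule sum.cong) (auto simp: burau_gen_alt ring_distribs)
  also have "\<dots> = burau n w r c + coef n i b r * burau n w (i - 1) c"
    using assms by (subst sum_mat_id_left) (auto simp: sum_mat_id_left)
  finally show ?thesis .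
qed


lemma burau_Nil[simp]: "burau n [] = mat_id" by (simp add: burau_def)

lemma burau_actw: "valid_word n w \<Longrightarrow> r < n - 1 \<Longrightarrow> burau n w r c = actw n w (\<lambda>j. mat_id j c) r"
proof (induction w arbitrary: r)
  case Nil then show ?case by simp
next
  case (Cons x w)
  obtain i b where x: "x = (i, b)" by force
  have i: "1 \<le> i" "i \<le> n - 1" "i - 1 < n - 1" using Cons.prems x by auto
  show ?case using Cons x i
    by (simp add: burau_Cons_entry act_def)
qed

lemma coef_im1: "coef n (Suc k) b k = 0"
  by (auto simp: coef_def)

lemma coef_far: "1 \<le> j \<Longrightarrow> Suc k + 2 \<le> j \<or> j + 2 \<le> Suc k \<Longrightarrow> coef n j b k = 0"
  by (auto simp: coef_def)

lemma coef_neg: "coef n i (\<not> b) r = - coef n i b r"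
  by (auto simp: coef_def)

lemma coef_facts:
  assumes "Suc (Suc k) \<le> n - 1"
  shows "coef n (Suc k) True (Suc k) = 1" "coef n (Suc (Suc k)) True k = -1" "coef n (Suc (Suc k)) True (Suc k) = 0"
  using assms by (auto simp: coef_def)

lemma act_cancel: "1 \<le> i \<Longrightarrow> act n i b \<circ> act n i (\<not> b) = id"
  by (cases i) (simp_all add: fun_eq_iff act_def coef_im1 coef_neg algebra_simps)

lemma act_far: "1 \<le> i \<Longrightarrow> 1 \<le> j \<Longrightarrow> i + 2 \<le> j \<or> j + 2 \<le> i \<Longrightarrow>
   act n i True \<circ> act n j True = act n j True \<circ> act n i True"
proof -
  assume a: "1 \<le> i" "1 \<le> j" "i + 2 \<le> j \<or> j + 2 \<le> i"
  obtain p q where pq: "i = Suc p" "j = Suc q" using a by (metis Suc_le_D One_nat_def)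
  have "coef n j True p = 0" "coef n i True q = 0"
    using coef_far[of j p] coef_far[of i q] a pq by auto
  then show ?thesis using pq by (simp add: fun_eq_iff act_def algebra_simps)
qed

lemma act_braid: "1 \<le> i \<Longrightarrow> Suc i \<le> n - 1 \<Longrightarrow>
   act n i True \<circ> act n (Suc i) True \<circ> act n i True = act n (Suc i) True \<circ> act n i True \<circ> act n (Suc i) True"
proof -
  assume a: "1 \<le> i" "Suc i \<le> n - 1"
  obtain k where k: "i = Suc k" using a by (metis Suc_le_D One_nat_def)
  note f = coef_facts[of k n] coef_im1[of n k True]
  show ?thesis using a k by (simp add: fun_eq_iff act_def f algebra_simps)
qed

lemma act_rel:
  assumes "(l, r) \<in> braid_relators n"
  shows "actw n l = actw n r"
proof -
  from assms consider (c) i b where "l = [(i, b), (i, \<not> b)]" "r = []" "1 \<le> i"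
    | (f) i j where "l = [(i, True), (j, True)]" "r = [(j, True), (i, True)]" "1 \<le> i" "1 \<le> j"
        "i + 2 \<le> j \<or> j + 2 \<le> i"
    | (br) i where "l = [(i, True), (Suc i, True), (i, True)]" "r = [(Suc i, True), (i, True), (Suc i, True)]"
        "1 \<le> i" "Suc i \<le> n - 1"
    unfolding braid_relators_def by blast
  then show ?thesis
  proof cases
    case c then show ?thesis using act_cancel[of i n b] by simp
  next
    case f then show ?thesis using act_far[of i j n] by (simp add: comp_assoc)
  next
    case br then show ?thesis using act_braid[of i n] by (simp add: comp_assoc)
  qed
qed

lemma actw_braid_eq: "braid_eq n u v \<Longrightarrow> actw n u = actw n v"
  by (induction rule: braid_eq.induct) (auto simp: actw_append act_rel)

lemma burau_braid_eq: "braid_eq n u v \<Longrightarrow> r < n - 1 \<Longrightarrow> burau n u r c = burau n v r c"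
  by (metis braid_eq_valid burau_actw actw_braid_eq)

lemma burau_append:
  assumes "valid_word n u" "valid_word n v" "r < n - 1"
  shows "burau n (u @ v) r c = (\<Sum>j<n - 1. burau n u r j * burau n v j c)"
  using assms
proof (induction u arbitrary: r)
  case Nil then show ?case by (simp add: sum_mat_id_left)
next
  case (Cons x u)
  obtain i b where x: "x = (i, b)" by force
  have i: "1 \<le> i" "i \<le> n - 1" "i - 1 < n - 1" using Cons.prems x by auto
  have "burau n (x # u @ v) r c = burau n (u @ v) r c + coef n i b r * burau n (u @ v) (i - 1) c"
    using Cons.prems x i by (simp add: burau_Cons_entry)
  also have "\<dots> = (\<Sum>j<n - 1. burau n u r j * burau n v j c) +
      coef n i b r * (\<Sum>j<n - 1. burau n u (i - 1) j * burau n v j c)"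
    using Cons i by simp
  also have "\<dots> = (\<Sum>j<n - 1. burau n (x # u) r j * burau n v j c)"
    using Cons.prems x i
    by (simp add: burau_Cons_entry sum.distrib sum_distrib_left ring_distribs mult.assoc)
  finally show ?case by simp
qed


definition congI :: "nat \<Rightarrow> nat \<Rightarrow> (nat \<Rightarrow> nat \<Rightarrow> int) \<Rightarrow> bool" where
  "congI n l M = (\<forall>r<n - 1. \<forall>c<n - 1. M r c mod int l = mat_id r c mod int l)"

lemma cls_cong: "valid_word n a \<Longrightarrow>
   braid_class n a \<in> congruence_subgroup n l \<longleftrightarrow> congI n l (burau n a)"
proof
  assume "valid_word n a" "braid_class n a \<in> congruence_subgroup n l"
  moreover have "a \<in> braid_class n a" using \<open>valid_word n a\<close> by (simp add: in_class_iff braid_eq.refl)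
  ultimately show "congI n l (burau n a)" unfolding congruence_subgroup_def congI_def by blast
next
  assume a: "valid_word n a" "congI n l (burau n a)"
  have "\<forall>w \<in> braid_class n a. \<forall>r < n - 1. \<forall>c < n - 1. burau n w r c mod int l = mat_id r c mod int l"
  proof (intro ballI allI impI)
    fix w r c assume "w \<in> braid_class n a" "r < n - 1" "c < n - 1"
    then have "burau n w r c = burau n a r c" unfolding in_class_iff
      using burau_braid_eq[of n a w r c] by simp
    then show "burau n w r c mod int l = mat_id r c mod int l"
      using a(2) \<open>r < n - 1\<close> \<open>c < n - 1\<close> unfolding congI_def by simp
  qed
  moreover have "braid_class n a \<in> carrier (braid_group n)" using a(1) by (auto simp: bg_carrier)
  ultimately show "braid_class n a \<in> congruence_subgroup n l" unfolding congruence_subgroup_def by blast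
qed

lemma sum_mod_cong:
  fixes f g :: "nat \<Rightarrow> int"
  assumes "\<And>j. j \<in> A \<Longrightarrow> f j mod m = g j mod m"
  shows "sum f A mod m = sum g A mod m"
proof -
  have "sum f A mod m = sum (\<lambda>j. f j mod m) A mod m" by (simp add: mod_sum_eq)
  also have "sum (\<lambda>j. f j mod m) A = sum (\<lambda>j. g j mod m) A" by (rule sum.cong) (simp_all add: assms)
  also have "sum (\<lambda>j. g j mod m) A mod m = sum g A mod m" by (simp add: mod_sum_eq)
  finally show ?thesis .
qed

lemma mult_cong:
  assumes "congI n l Q" "r < n - 1" "c < n - 1"
  shows "(\<Sum>j<n - 1. P r j * Q j c) mod int l = P r c mod int l"
proof -
  have "(\<Sum>j<n - 1. P r j * Q j c) mod int l = (\<Sum>j<n - 1. P r j * mat_id j c) mod int l"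
  proof (rule sum_mod_cong)
    fix j assume "j \<in> {..<n - 1}"
    then have "Q j c mod int l = mat_id j c mod int l" using assms(1,3) unfolding congI_def by auto
    then show "P r j * Q j c mod int l = P r j * mat_id j c mod int l"
    proof -
      have "P r j * Q j c mod int l = P r j * (Q j c mod int l) mod int l" by (simp add: mod_mult_right_eq)
      also have "\<dots> = P r j * (mat_id j c mod int l) mod int l" using \<open>Q j c mod int l = mat_id j c mod int l\<close> by simp
      also have "\<dots> = P r j * mat_id j c mod int l" by (simp add: mod_mult_right_eq)
      finally show ?thesis .
    qed
  qed
  also have "\<dots> = P r c mod int l" using assms(3) by (simp add: sum_mat_id_right)
  finally show ?thesis .
qed

lemma cong_append:
  assumes "valid_word n a" "valid_word n b" "congI n l (burau n a)" "congI n l (burau n b)"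
  shows "congI n l (burau n (a @ b))"
  unfolding congI_def
proof (intro allI impI)
  fix r c assume rc: "r < n - 1" "c < n - 1"
  have "burau n (a @ b) r c mod int l = burau n a r c mod int l"
    using burau_append[OF assms(1,2) rc(1)] mult_cong[OF assms(4) rc] by simp
  then show "burau n (a @ b) r c mod int l = mat_id r c mod int l"
    using assms(3) rc unfolding congI_def by simp
qed

lemma cong_inv:
  assumes "valid_word n a" "congI n l (burau n a)"
  shows "congI n l (burau n (invw a))"
  unfolding congI_def
proof (intro allI impI)
  fix r c assume rc: "r < n - 1" "c < n - 1"
  have "burau n (invw a @ a) r c = burau n [] r c"
    using burau_braid_eq[OF invw_cancel[OF assms(1)] rc(1)] .
  moreover have "burau n (invw a @ a) r c mod int l = burau n (invw a) r c mod int l"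
    using burau_append[OF invw_valid[OF assms(1)] assms(1) rc(1)] mult_cong[OF assms(2) rc] by simp
  ultimately show "burau n (invw a) r c mod int l = mat_id r c mod int l" by simp
qed

lemma cong_subgroup: "subgroup (congruence_subgroup n l) (braid_group n)"
proof (rule group.subgroupI[OF braid_group_is_group])
  show "congruence_subgroup n l \<subseteq> carrier (braid_group n)"
    by (auto simp: congruence_subgroup_def)
  have "braid_class n [] \<in> congruence_subgroup n l"
    by (simp add: cls_cong congI_def)
  then show "congruence_subgroup n l \<noteq> {}" by auto
next
  fix A assume A: "A \<in> congruence_subgroup n l"
  then obtain a where a: "valid_word n a" "A = braid_class n a"
    by (auto simp: congruence_subgroup_def bg_carrier)
  have ca: "congI n l (burau n a)" using A a cls_cong by auto
  have "inv\<^bsub>braid_group n\<^esub> A = braid_class n (invw a)"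
  proof (rule group.inv_equality[OF braid_group_is_group])
    show "braid_class n (invw a) \<otimes>\<^bsub>braid_group n\<^esub> A = \<one>\<^bsub>braid_group n\<^esub>"
      using a invw_valid[OF a(1)] invw_cancel[OF a(1)] by (simp add: bg_mult bg_one class_eq_iff)
    show "A \<in> carrier (braid_group n)" using a by (auto simp: bg_carrier)
    show "braid_class n (invw a) \<in> carrier (braid_group n)" using invw_valid[OF a(1)] by (auto simp: bg_carrier)
  qed
  then show "inv\<^bsub>braid_group n\<^esub> A \<in> congruence_subgroup n l"
    using cls_cong[OF invw_valid[OF a(1)]] cong_inv[OF a(1) ca] by simp
next
  fix A B assume A: "A \<in> congruence_subgroup n l" and B: "B \<in> congruence_subgroup n l"
  then obtain a b where a: "valid_word n a" "A = braid_class n a" and b: "valid_word n b" "B = braid_class n b"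
    by (auto simp: congruence_subgroup_def bg_carrier)
  show "A \<otimes>\<^bsub>braid_group n\<^esub> B \<in> congruence_subgroup n l"
    using a b A B cls_cong cong_append by (simp add: bg_mult)
qed


definition R :: "(nat \<Rightarrow> nat) \<Rightarrow> nat \<Rightarrow> nat \<Rightarrow> int" where
  "R p r c = (if (Suc r \<in> p ` {1..Suc c}) = (Suc (Suc r) \<in> p ` {1..Suc c}) then 0 else 1)"

lemma tr_mem: "k \<in> (tr i \<circ> p) ` A \<longleftrightarrow> tr i k \<in> p ` A"
proof -
  have "(tr i \<circ> p) ` A = tr i ` (p ` A)" by (simp add: image_comp)
  moreover have "k \<in> tr i ` B \<longleftrightarrow> tr i k \<in> B" for B
    unfolding tr_def by (metis image_iff transpose_involutory)
  ultimately show ?thesis by simp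
qed

lemma mod2_pm: "(k::int) = 1 \<or> k = -1 \<Longrightarrow> (x + k * y) mod 2 = (x mod 2 + y mod 2) mod 2"
  by (auto simp: mod_add_eq) presburger

lemma R_01: "R p r c = 0 \<or> R p r c = 1" by (simp add: R_def)

lemma burau_mod2: "valid_word n w \<Longrightarrow> r < n - 1 \<Longrightarrow> burau n w r c mod 2 = R (perm w) r c"
proof (induction w arbitrary: r)
  case Nil then show ?case by (auto simp: R_def mat_id_def)
next
  case (Cons x w)
  obtain i b where x: "x = (i, b)" by force
  have i: "1 \<le> i" "i \<le> n - 1" "i - 1 < n - 1" using Cons.prems x by auto
  define p where "p = perm w"
  define S where "S = p ` {1..Suc c}"
  have vw: "valid_word n w" using Cons.prems by simp
  have e: "burau n (x # w) r c = burau n w r c + coef n i b r * burau n w (i - 1) c"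
    using Cons.prems x i by (simp add: burau_Cons_entry)
  have IH1: "burau n w r c mod 2 = R p r c" using Cons.IH[OF vw Cons.prems(2)] p_def by simp
  have IH2: "burau n w (i - 1) c mod 2 = R p (i - 1) c" using Cons.IH[OF vw i(3)] p_def by simp
  have Rtr: "R (perm (x # w)) r c = (if (tr i (Suc r) \<in> S) = (tr i (Suc (Suc r)) \<in> S) then 0 else 1)"
    unfolding x perm_Cons R_def tr_mem S_def p_def by simp
  have Rp: "R p q c = (if (Suc q \<in> S) = (Suc (Suc q) \<in> S) then 0 else 1)" for q
    by (simp add: R_def S_def)
  consider "r = i" | "2 \<le> i \<and> r = i - 2" | "r \<noteq> i \<and> \<not> (2 \<le> i \<and> r = i - 2)" by blast
  then show ?case
  proof cases
    case 1
    then have "coef n i b r = 1 \<or> coef n i b r = -1" using Cons.prems by (auto simp: coef_def)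
    then have "burau n (x # w) r c mod 2 = (R p r c + R p (i - 1) c) mod 2"
      using e IH1 IH2 mod2_pm by simp
    moreover have "tr i (Suc r) = i" "tr i (Suc (Suc r)) = Suc (Suc i)" "Suc (i - 1) = i"
      using 1 i by (auto simp: tr_def transpose_def)
    ultimately show ?thesis using 1 Rtr Rp[of i] Rp[of "i - 1"] by auto
  next
    case 2
    then have "coef n i b r = 1 \<or> coef n i b r = -1" by (auto simp: coef_def)
    then have "burau n (x # w) r c mod 2 = (R p r c + R p (i - 1) c) mod 2"
      using e IH1 IH2 mod2_pm by simp
    moreover have "tr i (Suc r) = i - 1" "tr i (Suc (Suc r)) = Suc i" "Suc (i - 1) = i"
      "Suc r = i - 1" "Suc (Suc r) = i"
      using 2 i by (auto simp: tr_def transpose_def)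
    ultimately show ?thesis using 2 Rtr Rp[of r] Rp[of "i - 1"] by auto
  next
    case 3
    then have "coef n i b r = 0" by (auto simp: coef_def)
    then have "burau n (x # w) r c mod 2 = R p r c" using e IH1 by simp
    moreover have "(tr i (Suc r) \<in> S) = (tr i (Suc (Suc r)) \<in> S) \<longleftrightarrow> (Suc r \<in> S) = (Suc (Suc r) \<in> S)"
    proof (cases "Suc r = i")
      case True then show ?thesis by (auto simp: tr_def transpose_def)
    next
      case False
      then have "tr i (Suc r) = Suc r" "tr i (Suc (Suc r)) = Suc (Suc r)" using 3 i
        by (auto simp: tr_def transpose_def)
      then show ?thesis by simp
    qed
    ultimately show ?thesis using Rtr Rp[of r] by simp
  qed
qed


lemma R_id: "R id r c = mat_id r c"
  by (auto simp: R_def mat_id_def)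

lemma R_eq1: "R p a b = 1 \<longleftrightarrow> (Suc a \<in> p ` {1..Suc b}) \<noteq> (Suc (Suc a) \<in> p ` {1..Suc b})"
  by (simp add: R_def)

lemma R_eq0: "R p a b = 0 \<longleftrightarrow> (Suc a \<in> p ` {1..Suc b}) = (Suc (Suc a) \<in> p ` {1..Suc b})"
  by (simp add: R_def)

lemma R_faithful:
  assumes n: "n \<ge> 3" and p: "p permutes {1..n}"
    and h: "\<forall>r<n - 1. \<forall>c<n - 1. R p r c = mat_id r c"
  shows "p = id"
proof -
  have inj: "inj p" using p permutes_inj by blast
  have low: "p k = k" if "1 \<le> k" "k \<le> n - 1" for k
    using that
  proof (induction k rule: less_induct)
    case (less k)
    have pj: "p j = j" if "1 \<le> j" "j < k" for j using less.IH that less.prems by auto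
    show ?case
    proof (rule ccontr)
      assume ne: "p k \<noteq> k"
      have pk_in: "p k \<in> {1..n}" using p less.prems permutes_in_image[OF p] by auto
      have pk_notlow: "\<not> (1 \<le> p k \<and> p k < k)"
      proof
        assume a: "1 \<le> p k \<and> p k < k"
        then have "p (p k) = p k" using pj by auto
        then have "p k = k" by (rule injD[OF inj])
        then show False using ne by simp
      qed
      have gt: "p k > k" using pk_in pk_notlow ne by auto
      define S where "S = p ` {1..k}"
      have S: "x \<in> S \<longleftrightarrow> (1 \<le> x \<and> x < k) \<or> x = p k" for x
      proof
        assume "x \<in> S"
        then obtain y where y: "1 \<le> y" "y \<le> k" "x = p y" by (auto simp: S_def)
        then show "(1 \<le> x \<and> x < k) \<or> x = p k" using pj by (cases "y = k") auto
      next
        assume "(1 \<le> x \<and> x < k) \<or> x = p k"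
        then show "x \<in> S"
        proof
          assume "1 \<le> x \<and> x < k"
          then have "x = p x" "x \<in> {1..k}" using pj by auto
          then show "x \<in> S" unfolding S_def by (rule image_eqI)
        next
          assume "x = p k"
          moreover have "k \<in> {1..k}" using less.prems by auto
          ultimately show "x \<in> S" unfolding S_def by (rule image_eqI)
        qed
      qed
      have Sk: "k - 1 < n - 1" "Suc (k - 1) = k" using less.prems by auto
      have "R p (k - 1) (k - 1) = 1" using h Sk by (simp add: mat_id_def)
      then have "(k \<in> S) \<noteq> (Suc k \<in> S)" unfolding R_eq1 S_def Sk(2) .
      moreover have "k \<notin> S" using S[of k] ne by simp
      ultimately have "Suc k \<in> S" by simp
      then have pk: "p k = Suc k" using S[of "Suc k"] by simp
      show False
      proof (cases "k = 1")
        case True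
        have "R p 1 0 = 0" using h n by (simp add: mat_id_def)
        then have "(Suc 1 \<in> S) = (Suc (Suc 1) \<in> S)" unfolding R_eq0 S_def True by simp
        moreover have "Suc 1 \<in> S" using S[of "Suc 1"] pk True by simp
        moreover have "Suc (Suc 1) \<notin> S" using S[of "Suc (Suc 1)"] pk True by simp
        ultimately show False by simp
      next
        case False
        have "k - 2 < n - 1" "k - 2 \<noteq> k - 1" "Suc (k - 2) = k - 1" "Suc (Suc (k - 2)) = k"
          using False less.prems by auto
        then have "R p (k - 2) (k - 1) = 0" using h Sk by (simp add: mat_id_def)
        then have "(k - 1 \<in> S) = (k \<in> S)"
          unfolding R_eq0 S_def Sk(2) \<open>Suc (k - 2) = k - 1\<close> \<open>Suc (Suc (k - 2)) = k\<close> .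
        moreover have "1 \<le> k - 1 \<and> k - 1 < k" using False less.prems by auto
        then have "k - 1 \<in> S" using S[of "k - 1"] by blast
        moreover have "k \<notin> S" using S[of k] ne by simp
        ultimately show False by simp
      qed
    qed
  qed
  have top: "p n = n"
  proof (rule ccontr)
    assume ne: "p n \<noteq> n"
    have "p n \<in> {1..n}" using permutes_in_image[OF p] n by auto
    then have "1 \<le> p n" "p n \<le> n - 1" using ne by auto
    then have "p (p n) = p n" using low by auto
    then have "p n = n" by (rule injD[OF inj])
    then show False using ne by simp
  qed
  show ?thesis
  proof
    fix x
    show "p x = id x"
    proof (cases "x \<in> {1..n}")
      case True
      then show ?thesis using low top by (cases "x = n") auto
    next
      case False then show ?thesis using permutes_not_in[OF p] by simp
    qed
  qed
qed

lemma crt: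
  fixes x y :: int
  assumes "odd l" "x mod int l = y mod int l" "x mod 2 = y mod 2"
  shows "x mod int (2 * l) = y mod int (2 * l)"
proof -
  have "int l dvd (x - y)" "2 dvd (x - y)" using assms by (auto simp: mod_eq_dvd_iff)
  moreover have "coprime (2::int) (int l)" using assms(1) by auto
  ultimately have "2 * int l dvd (x - y)" by (simp add: divides_mult)
  then show ?thesis by (simp add: mod_eq_dvd_iff)
qed


lemma burau_rep:
  assumes "r < n - 1" "1 \<le> i" "i \<le> n - 1"
  shows "burau n (replicate k (i, True)) r c = mat_id r c + int k * coef n i True r * mat_id (i - 1) c"
  using assms(1)
proof (induction k arbitrary: r)
  case 0 then show ?case by simp
next
  case (Suc k)
  have i1: "i - 1 < n - 1" using assms by auto
  obtain m where m: "i = Suc m" using assms(2) by (metis Suc_le_D One_nat_def)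
  have c0: "coef n i True (i - 1) = 0" using m coef_im1 by simp
  have "burau n (replicate (Suc k) (i, True)) r c =
        burau n (replicate k (i, True)) r c + coef n i True r * burau n (replicate k (i, True)) (i - 1) c"
    using burau_Cons_entry[OF Suc.prems assms(2,3)] by simp
  also have "\<dots> = mat_id r c + int k * coef n i True r * mat_id (i - 1) c + coef n i True r * mat_id (i - 1) c"
    using Suc.IH[OF Suc.prems] Suc.IH[OF i1] c0 by simp
  finally show ?case by (simp add: algebra_simps)
qed

lemma valid_rep: "1 \<le> i \<Longrightarrow> i \<le> n - 1 \<Longrightarrow> valid_word n (replicate k (i, b))"
  by (induction k) auto

lemma cong_rep:
  assumes "1 \<le> i" "i \<le> n - 1"
  shows "congI n l (burau n (replicate l (i, True)))"
  unfolding congI_def using burau_rep[OF _ assms] by (simp add: mult.assoc)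

lemma perm_rep: "perm (replicate k (i, b)) = (if even k then id else tr i)"
  by (induction k) (auto simp: tr_def fun_eq_iff)

lemma h_class: "valid_word n a \<Longrightarrow> perm (SOME w. w \<in> braid_class n a) = perm a"
  using perm_braid_eq[OF rep_class] by simp

lemma mod_down: "(m::int) dvd M \<Longrightarrow> x mod M = y mod M \<Longrightarrow> x mod m = y mod m"
  by (metis mod_mod_cancel)

theorem theorem3p1:
  fixes n l :: nat
  assumes "n \<ge> 3" and "l > 0" and "odd l"
  shows "((braid_group n)\<lparr>carrier := congruence_subgroup n l\<rparr>)
           Mod (congruence_subgroup n (2 * l)) \<cong> sym_group n"
proof -
  define G' where "G' = (braid_group n)\<lparr>carrier := congruence_subgroup n l\<rparr>"
  define h where "h = (\<lambda>A. perm (SOME w. w \<in> A))"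
  have BG: "group (braid_group n)" by (rule braid_group_is_group)
  have grp: "group G'" unfolding G'_def
    by (rule subgroup.subgroup_is_group[OF cong_subgroup BG])
  have memB: "\<exists>a. valid_word n a \<and> A = braid_class n a" if "A \<in> congruence_subgroup n m" for A m
    using that by (auto simp: congruence_subgroup_def bg_carrier)
  have hom: "h \<in> hom G' (sym_group n)"
  proof (rule homI)
    fix A assume "A \<in> carrier G'"
    then obtain a where a: "valid_word n a" "A = braid_class n a" using memB by (auto simp: G'_def)
    show "h A \<in> carrier (sym_group n)"
      using a h_class[OF a(1)] perm_permutes[OF a(1)] by (simp add: h_def sym_group_carrier)
  next
    fix A B assume "A \<in> carrier G'" "B \<in> carrier G'"
    then have "A \<in> congruence_subgroup n l" "B \<in> congruence_subgroup n l" by (auto simp: G'_def)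
    then obtain a b where a: "valid_word n a" "A = braid_class n a" and b: "valid_word n b" "B = braid_class n b"
      using memB by blast
    show "h (A \<otimes>\<^bsub>G'\<^esub> B) = h A \<otimes>\<^bsub>sym_group n\<^esub> h B"
      using a b h_class[OF a(1)] h_class[OF b(1)] h_class[of n "a @ b"]
      by (simp add: G'_def h_def bg_mult sym_group_mult perm_append)
  qed
  have gh: "group_hom G' (sym_group n) h"
    using grp hom sym_group_is_group by (simp add: group_hom_def group_hom_axioms_def)
  have ker: "kernel G' (sym_group n) h = congruence_subgroup n (2 * l)"
  proof
    show "kernel G' (sym_group n) h \<subseteq> congruence_subgroup n (2 * l)"
    proof
      fix A assume A: "A \<in> kernel G' (sym_group n) h"
      then have A1: "A \<in> congruence_subgroup n l" "h A = id"
        by (auto simp: kernel_def G'_def sym_group_one)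
      obtain a where a: "valid_word n a" "A = braid_class n a" using memB[OF A1(1)] by auto
      have pa: "perm a = id" using A1(2) h_class[OF a(1)] a by (simp add: h_def)
      have cl: "congI n l (burau n a)" using A1(1) a cls_cong by auto
      have "congI n (2 * l) (burau n a)" unfolding congI_def
      proof (intro allI impI)
        fix r c assume rc: "r < n - 1" "c < n - 1"
        have m2: "burau n a r c mod 2 = mat_id r c mod 2"
          using burau_mod2[OF a(1) rc(1)] pa R_id by (simp add: mat_id_def)
        show "burau n a r c mod int (2 * l) = mat_id r c mod int (2 * l)"
          using crt[OF assms(3) _ m2] cl rc unfolding congI_def by blast
      qed
      then show "A \<in> congruence_subgroup n (2 * l)" using a cls_cong by auto
    qed
  next
    show "congruence_subgroup n (2 * l) \<subseteq> kernel G' (sym_group n) h"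
    proof
      fix A assume A: "A \<in> congruence_subgroup n (2 * l)"
      obtain a where a: "valid_word n a" "A = braid_class n a" using memB[OF A] by auto
      have c2: "congI n (2 * l) (burau n a)" using A a cls_cong by auto
      have dv: "int l dvd int (2 * l)" "(2::int) dvd int (2 * l)" by auto
      have cl: "congI n l (burau n a)" using c2 unfolding congI_def
        using mod_down[OF dv(1)] by blast
      have "\<forall>r<n - 1. \<forall>c<n - 1. R (perm a) r c = mat_id r c"
      proof (intro allI impI)
        fix r c assume rc: "r < n - 1" "c < n - 1"
        have "burau n a r c mod 2 = mat_id r c mod 2"
          using c2 rc unfolding congI_def using mod_down[OF dv(2)] by blast
        then show "R (perm a) r c = mat_id r c"
          using burau_mod2[OF a(1) rc(1)] by (simp add: mat_id_def)
      qed
      then have "perm a = id" using R_faithful[OF assms(1) perm_permutes[OF a(1)]] by blast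
      moreover have "A \<in> congruence_subgroup n l" using cl a cls_cong by auto
      ultimately show "A \<in> kernel G' (sym_group n) h"
        using h_class[OF a(1)] a by (simp add: kernel_def G'_def h_def sym_group_one)
    qed
  qed
  have surj: "h ` carrier G' = carrier (sym_group n)"
  proof
    show "h ` carrier G' \<subseteq> carrier (sym_group n)"
      using hom by (auto simp: hom_def)
  next
    define Img where "Img = h ` congruence_subgroup n l"
    have Iid: "id \<in> Img"
    proof -
      have "braid_class n [] \<in> congruence_subgroup n l" by (simp add: cls_cong congI_def)
      moreover have "id = h (braid_class n [])" using h_class[of n "[]"] by (simp add: h_def)
      ultimately show ?thesis unfolding Img_def by (intro image_eqI)
    qed
    have Icomp: "p \<circ> q \<in> Img" if PQ: "p \<in> Img" "q \<in> Img" for p q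
    proof -
      obtain A where A: "A \<in> congruence_subgroup n l" "p = h A"
        using PQ(1) unfolding Img_def by blast
      obtain B where B: "B \<in> congruence_subgroup n l" "q = h B"
        using PQ(2) unfolding Img_def by blast
      note AB = A(1) B(1) A(2) B(2)
      have "A \<otimes>\<^bsub>braid_group n\<^esub> B \<in> congruence_subgroup n l"
        using AB subgroup.m_closed[OF cong_subgroup] by blast
      moreover have "h (A \<otimes>\<^bsub>braid_group n\<^esub> B) = p \<circ> q"
        using hom AB unfolding hom_def by (simp add: G'_def sym_group_mult)
      ultimately show ?thesis unfolding Img_def by (metis rev_image_eqI)
    qed
    have Itr: "tr i \<in> Img" if "1 \<le> i" "i \<le> n - 1" for i
    proof -
      have "braid_class n (replicate l (i, True)) \<in> congruence_subgroup n l"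
        using cls_cong[OF valid_rep[OF that]] cong_rep[OF that] by simp
      moreover have "h (braid_class n (replicate l (i, True))) = tr i"
        using h_class[OF valid_rep[OF that]] perm_rep assms(3) by (simp add: h_def)
      ultimately show ?thesis unfolding Img_def by (metis rev_image_eqI)
    qed
    have Itrans: "Transposition.transpose a (a + d) \<in> Img" if "1 \<le> a" "a + d \<le> n" "d \<ge> 1" for a d
      using that
    proof (induction d arbitrary: a rule: less_induct)
      case (less d)
      show ?case
      proof (cases "d = 1")
        case True
        then show ?thesis using Itr[of a] less.prems by (simp add: tr_def)
      next
        case False
        have IH: "Transposition.transpose (Suc a) (Suc a + (d - 1)) \<in> Img"
          using less.IH[of "d - 1" "Suc a"] less.prems False by auto
        have eq: "tr a \<circ> Transposition.transpose (Suc a) (Suc a + (d - 1)) \<circ> tr a = Transposition.transpose a (a + d)"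
          unfolding tr_def using False less.prems
          by (subst transpose_comp_triple) auto
        have "tr a \<in> Img" using Itr[of a] less.prems by auto
        then have "tr a \<circ> Transposition.transpose (Suc a) (Suc a + (d - 1)) \<in> Img" using IH by (rule Icomp)
        then have "tr a \<circ> Transposition.transpose (Suc a) (Suc a + (d - 1)) \<circ> tr a \<in> Img"
          using \<open>tr a \<in> Img\<close> by (rule Icomp)
        then show ?thesis by (simp only: eq)
      qed
    qed
    have Itrans2: "Transposition.transpose a b \<in> Img" if "a \<in> {1..n}" "b \<in> {1..n}" "a \<noteq> b" for a b
    proof (cases "a < b")
      case True
      then show ?thesis using Itrans[of a "b - a"] that by auto
    next
      case False
      then show ?thesis using Itrans[of b "a - b"] that by (auto simp: transpose_commute)
    qed
    show "carrier (sym_group n) \<subseteq> h ` carrier G'"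
    proof
      fix p assume "p \<in> carrier (sym_group n)"
      then have p: "p permutes {1..n}" by (simp add: sym_group_carrier)
      have "p \<in> Img"
        using p finite_atLeastAtMost
      proof (induction rule: permutes_induct)
        case id then show ?case by (rule Iid)
      next
        case (swap a b p) then show ?case using Itrans2 Icomp by blast
      qed
      then show "p \<in> h ` carrier G'" by (simp add: Img_def G'_def)
    qed
  qed
  have "G' Mod kernel G' (sym_group n) h \<cong> sym_group n"
    by (rule group_hom.FactGroup_iso[OF gh surj])
  then show ?thesis using ker by (simp add: G'_def)
qed

end
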